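(* If $n\ge1$ and $m\ge 2$ are both odd, then $K(\mathbb{Z}_m^n)=\mathbb{Z}_m^n$.
   Context: The Ducci function $D:\mathbb{Z}_m^n\to\mathbb{Z}_m^n$ is $D(x_1,\dots,x_n)=(x_1+x_2,\,x_2+x_3,\,\dots,\,x_{n-1}+x_n,\,x_n+x_1)$, entries mod $m$. $K(\mathbb{Z}_m^n)$ is the set of $\mathbf{u}\in\mathbb{Z}_m^n$ lying in the Ducci cycle of some tuple, i.e. the set of $\mathbf{u}$ with $D^k(\mathbf{u})=\mathbf{u}$ for some $k\ge1$. *)

theory Defs
  imports Main
begin

text \<open>n-tuples over Z_m are represented as functions nat \<Rightarrow> int whose entries at
indices 0..n-1 lie in {0..<m} and which vanish at indices \<ge> n.\<close>

definition tuples :: "nat \<Rightarrow> nat \<Rightarrow> (nat \<Rightarrow> int) set" where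
  "tuples m n = {x. (\<forall>i<n. 0 \<le> x i \<and> x i < int m) \<and> (\<forall>i\<ge>n. x i = 0)}"

definition ducci :: "nat \<Rightarrow> nat \<Rightarrow> (nat \<Rightarrow> int) \<Rightarrow> (nat \<Rightarrow> int)" where
  "ducci m n x = (\<lambda>i. if i < n then (x i + x ((i + 1) mod n)) mod int m else 0)"

definition ducci_K :: "nat \<Rightarrow> nat \<Rightarrow> (nat \<Rightarrow> int) set" where
  "ducci_K m n = {u \<in> tuples m n. \<exists>k\<ge>1. (ducci m n ^^ k) u = u}"

end

theory Submission
  imports Defs
begin

lemma funpow_in:
  assumes "f ` S \<subseteq> S" "x \<in> S" shows "(f ^^ i) x \<in> S"
  using assms by (induction i) auto

lemma funpow_cancel:
  assumes "f ` S \<subseteq> S" "inj_on f S" "a \<in> S" "b \<in> S" "(f ^^ i) a = (f ^^ i) b"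
  shows "a = b"
  using assms(3-5)
proof (induction i arbitrary: a b)
  case 0 then show ?case by simp
next
  case (Suc i)
  have "(f ^^ i) (f a) = (f ^^ i) (f b)" using Suc.prems by (simp add: funpow_Suc_right del: funpow.simps)
  moreover have "f a \<in> S" "f b \<in> S" using Suc.prems assms(1) by auto
  ultimately have "f a = f b" using Suc.IH by blast
  then show ?case using assms(2) Suc.prems inj_on_def by metis
qed

lemma periodic:
  assumes "finite S" "f ` S \<subseteq> S" "inj_on f S" "x \<in> S"
  shows "\<exists>k\<ge>1. (f ^^ k) x = x"
proof -
  let ?g = "\<lambda>i. (f ^^ i) x"
  have "?g ` {0..card S} \<subseteq> S" using funpow_in[OF assms(2,4)] by auto
  hence "card (?g ` {0..card S}) \<le> card S" using assms(1) card_mono by blast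
  hence "\<not> inj_on ?g {0..card S}" using card_image by fastforce
  then obtain i j where ij: "i \<le> card S" "j \<le> card S" "i \<noteq> j" "?g i = ?g j"
    unfolding inj_on_def by auto
  have key: "\<exists>k\<ge>1. (f ^^ k) x = x" if "i < j" "?g i = ?g j" for i j
  proof -
    from that have "(f ^^ i) x = (f ^^ i) ((f ^^ (j - i)) x)"
      by (metis add_diff_inverse_nat funpow_add less_imp_le_nat not_le o_apply)
    hence "x = (f ^^ (j - i)) x"
      using funpow_cancel[OF assms(2,3) assms(4) funpow_in[OF assms(2,4)]] by blast
    hence "\<exists>k\<ge>1. (f ^^ k) x = x" using \<open>i < j\<close> by (intro exI[of _ "j - i"]) auto
    then show ?thesis .
  qed
  show ?thesis
  proof (cases "i < j")
    case True then show ?thesis using key ij(4) by blast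
  next
    case False then have "j < i" using ij(3) by simp
    then show ?thesis using key ij(4) by simp
  qed
qed

lemma ducci_in:
  assumes "m \<ge> 1" "x \<in> tuples m n" shows "ducci m n x \<in> tuples m n"
  using assms unfolding tuples_def ducci_def by auto

lemma ducci_inj:
  fixes m n :: nat
  assumes "n \<ge> 1" and "m \<ge> 2" and "odd n" and "odd m"
  shows "inj_on (ducci m n) (tuples m n)"
proof (rule inj_onI)
  fix x y assume x: "x \<in> tuples m n" and y: "y \<in> tuples m n" and e: "ducci m n x = ducci m n y"
  define z where "z i = x i - y i" for i
  have d: "int m dvd z i + z ((i + 1) mod n)" if "i < n" for i
  proof -
    have "(x i + x ((i + 1) mod n)) mod int m = (y i + y ((i + 1) mod n)) mod int m"
      using fun_cong[OF e, of i] that unfolding ducci_def by simp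
    hence "int m dvd (x i + x ((i + 1) mod n)) - (y i + y ((i + 1) mod n))"
      using mod_eq_dvd_iff by blast
    thus ?thesis unfolding z_def by (simp add: algebra_simps)
  qed
  have p: "int m dvd z i - (-1) ^ i * z 0" if "i < n" for i
    using that
  proof (induction i)
    case 0 then show ?case by simp
  next
    case (Suc i)
    have "int m dvd z i + z (Suc i)" using d[of i] Suc.prems by simp
    moreover have "int m dvd z i - (-1) ^ i * z 0" using Suc by simp
    ultimately have "int m dvd (z i + z (Suc i)) - (z i - (-1) ^ i * z 0)" by (rule dvd_diff)
    thus ?case by (simp add: algebra_simps)
  qed
  have "int m dvd z (n - 1) + z 0" using d[of "n - 1"] assms(1) by simp
  moreover have "int m dvd z (n - 1) - z 0"
    using p[of "n - 1"] assms by (simp add: neg_one_even_power)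
  ultimately have "int m dvd (z (n - 1) + z 0) - (z (n - 1) - z 0)" by (rule dvd_diff)
  hence "int m dvd 2 * z 0" by simp
  moreover have "coprime (int m) 2" using assms(4) by simp
  ultimately have z0: "int m dvd z 0" by (meson coprime_dvd_mult_right_iff)
  show "x = y"
  proof
    fix i
    show "x i = y i"
    proof (cases "i < n")
      case True
      have "z i = (z i - (-1) ^ i * z 0) + (-1) ^ i * z 0" by simp
      also have "int m dvd \<dots>" using p[OF True] dvd_mult[OF z0] by (rule dvd_add)
      finally have "int m dvd z i" .
      moreover have "\<bar>z i\<bar> < int m" 
      proof -
        have "0 \<le> x i" "x i < int m" "0 \<le> y i" "y i < int m" using x y True unfolding tuples_def by auto
        then show ?thesis unfolding z_def by linarith
      qed
      ultimately have "z i = 0"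
      proof -
        assume a: "int m dvd z i" "\<bar>z i\<bar> < int m"
        show "z i = 0"
        proof (rule ccontr)
          assume "z i \<noteq> 0"
          then have "\<bar>int m\<bar> \<le> \<bar>z i\<bar>" using dvd_imp_le_int a(1) by blast
          then show False using a(2) by simp
        qed
      qed
      then show ?thesis unfolding z_def by simp
    next
      case False
      then show ?thesis using x y unfolding tuples_def by auto
    qed
  qed
qed

theorem corollary2p3:
  fixes m n :: nat
  assumes "n \<ge> 1" and "m \<ge> 2" and "odd n" and "odd m"
  shows "ducci_K m n = tuples m n"
proof
  show "ducci_K m n \<subseteq> tuples m n" unfolding ducci_K_def by auto
next
  have fin: "finite (tuples m n)"
  proof -
    have "tuples m n \<subseteq> {f. \<forall>x. (x \<in> {..<n} \<longrightarrow> f x \<in> {0..<int m}) \<and> (x \<notin> {..<n} \<longrightarrow> f x = 0)}"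
      unfolding tuples_def by auto
    moreover have "finite {f. \<forall>x. (x \<in> {..<n} \<longrightarrow> f x \<in> {0..<int m}) \<and> (x \<notin> {..<n} \<longrightarrow> f x = 0)}"
      by (rule finite_set_of_finite_funs) auto
    ultimately show ?thesis using finite_subset by blast
  qed
  show "tuples m n \<subseteq> ducci_K m n"
  proof
    fix u assume u: "u \<in> tuples m n"
    have "ducci m n ` tuples m n \<subseteq> tuples m n" using ducci_in assms(2) by auto
    then have "\<exists>k\<ge>1. (ducci m n ^^ k) u = u"
      using periodic[OF fin _ ducci_inj[OF assms] u] by blast
    then show "u \<in> ducci_K m n" using u unfolding ducci_K_def by auto
  qed
qed

end
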